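(* For $n\ge3$, let $n$-Go denote the equation $a_1\overset{\gamma}{\equiv}a_n=a_n\overset{\gamma}{\equiv}a_1$. Then: (i) for every $n\ge3$, $n$-Go holds in every ortholattice that admits a strong set of states; (ii) every ortholattice satisfying $n$-Go (for any $n\ge3$) is orthomodular; (iii) for every $n\ge 3$, there is an orthomodular lattice in which $n$-Go fails.
   Context: An ortholattice (OL) is a bounded lattice with an operation $'$ satisfying $a''=a$, $a\le b\Rightarrow b'\le a'$, $a\cap a'=0$ and $a\cup a'=1$. An orthomodular lattice is an OL in which $a\le b$ implies $b=a\cup(a'\cap b)$. Write $a\to b=a'\cup(a\cap b)$ and $a\perp b$ for $a\le b'$. The Godowski identity is $$a_1\overset{\gamma}{\equiv}a_n=(a_1\to a_2)\cap(a_2\to a_3)\cap\cdots\cap(a_{n-1}\to a_n)\cap(a_n\to a_1),$$ and $$a_n\overset{\gamma}{\equiv}a_1=(a_n\to a_{n-1})\cap(a_{n-1}\to a_{n-2})\cap\cdots\cap(a_2\to a_1)\cap(a_1\to a_n).$$ A state on an OL $L$ is a map $m:L\to[0,1]$ with $m(1)=1$ and $a\perp b\Rightarrow m(a\cup b)=m(a)+m(b)$. $L$ admits a strong set of states if there is a nonempty set $S$ of states such that for all $a,b\in L$ with $a\not\le b$ some $m\in S$ has $m(a)=1$ and $m(b)\neq1$. *)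

theory Defs
  imports Complex_Main
begin

record 'a ol =
  carrier :: "'a set"
  le :: "'a \<Rightarrow> 'a \<Rightarrow> bool"
  meet :: "'a \<Rightarrow> 'a \<Rightarrow> 'a"
  join :: "'a \<Rightarrow> 'a \<Rightarrow> 'a"
  compl :: "'a \<Rightarrow> 'a"
  zero :: 'a
  one :: 'a

definition bounded_lattice_on :: "('a, 'b) ol_scheme \<Rightarrow> bool" where
  "bounded_lattice_on L \<longleftrightarrow>
     zero L \<in> carrier L \<and> one L \<in> carrier L \<and>
     (\<forall>a\<in>carrier L. \<forall>b\<in>carrier L. meet L a b \<in> carrier L \<and> join L a b \<in> carrier L) \<and>
     (\<forall>a\<in>carrier L. le L a a) \<and>
     (\<forall>a\<in>carrier L. \<forall>b\<in>carrier L. le L a b \<and> le L b a \<longrightarrow> a = b) \<and>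
     (\<forall>a\<in>carrier L. \<forall>b\<in>carrier L. \<forall>c\<in>carrier L. le L a b \<and> le L b c \<longrightarrow> le L a c) \<and>
     (\<forall>a\<in>carrier L. \<forall>b\<in>carrier L. \<forall>c\<in>carrier L.
        le L (meet L a b) a \<and> le L (meet L a b) b \<and>
        (le L c a \<and> le L c b \<longrightarrow> le L c (meet L a b))) \<and>
     (\<forall>a\<in>carrier L. \<forall>b\<in>carrier L. \<forall>c\<in>carrier L.
        le L a (join L a b) \<and> le L b (join L a b) \<and>
        (le L a c \<and> le L b c \<longrightarrow> le L (join L a b) c)) \<and>
     (\<forall>a\<in>carrier L. le L (zero L) a \<and> le L a (one L))"

definition ortholattice :: "('a, 'b) ol_scheme \<Rightarrow> bool" where
  "ortholattice L \<longleftrightarrow> bounded_lattice_on L \<and>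
     (\<forall>a\<in>carrier L. compl L a \<in> carrier L) \<and>
     (\<forall>a\<in>carrier L. compl L (compl L a) = a) \<and>
     (\<forall>a\<in>carrier L. \<forall>b\<in>carrier L. le L a b \<longrightarrow> le L (compl L b) (compl L a)) \<and>
     (\<forall>a\<in>carrier L. meet L a (compl L a) = zero L \<and> join L a (compl L a) = one L)"

definition orthomodular :: "('a, 'b) ol_scheme \<Rightarrow> bool" where
  "orthomodular L \<longleftrightarrow> ortholattice L \<and>
     (\<forall>a\<in>carrier L. \<forall>b\<in>carrier L. le L a b \<longrightarrow> b = join L a (meet L (compl L a) b))"

definition imp :: "('a, 'b) ol_scheme \<Rightarrow> 'a \<Rightarrow> 'a \<Rightarrow> 'a" where
  "imp L a b = join L (compl L a) (meet L a b)"

definition orth :: "('a, 'b) ol_scheme \<Rightarrow> 'a \<Rightarrow> 'a \<Rightarrow> bool" where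
  "orth L a b \<longleftrightarrow> le L a (compl L b)"

text \<open>Finite meet of a list, right-nested: x1 \<inter> (x2 \<inter> (... \<inter> xk)), with the last
  element not meeted with 1 (lists here are always nonempty).\<close>
fun meets :: "('a, 'b) ol_scheme \<Rightarrow> 'a list \<Rightarrow> 'a" where
  "meets L [] = one L"
| "meets L [x] = x"
| "meets L (x # y # ys) = meet L x (meets L (y # ys))"

text \<open>For a list xs = [a_1, ..., a_n] (0-indexed: a_(i+1) = xs!i):
  godowski_fwd = (a1\<rightarrow>a2) \<inter> (a2\<rightarrow>a3) \<inter> ... \<inter> (a(n-1)\<rightarrow>an) \<inter> (an\<rightarrow>a1),
  godowski_bwd = (an\<rightarrow>a(n-1)) \<inter> ... \<inter> (a2\<rightarrow>a1) \<inter> (a1\<rightarrow>an).\<close>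
definition godowski_fwd :: "('a, 'b) ol_scheme \<Rightarrow> 'a list \<Rightarrow> 'a" where
  "godowski_fwd L xs =
     meets L (map (\<lambda>i. imp L (xs ! i) (xs ! (i + 1))) [0..<length xs - 1]
              @ [imp L (xs ! (length xs - 1)) (xs ! 0)])"

definition godowski_bwd :: "('a, 'b) ol_scheme \<Rightarrow> 'a list \<Rightarrow> 'a" where
  "godowski_bwd L xs =
     meets L (map (\<lambda>i. imp L (xs ! (i + 1)) (xs ! i)) (rev [0..<length xs - 1])
              @ [imp L (xs ! 0) (xs ! (length xs - 1))])"

definition n_Go :: "nat \<Rightarrow> ('a, 'b) ol_scheme \<Rightarrow> bool" where
  "n_Go n L \<longleftrightarrow>
     (\<forall>xs. length xs = n \<and> set xs \<subseteq> carrier L \<longrightarrow> godowski_fwd L xs = godowski_bwd L xs)"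

definition is_state :: "('a, 'b) ol_scheme \<Rightarrow> ('a \<Rightarrow> real) \<Rightarrow> bool" where
  "is_state L m \<longleftrightarrow>
     (\<forall>a\<in>carrier L. 0 \<le> m a \<and> m a \<le> 1) \<and>
     m (one L) = 1 \<and>
     (\<forall>a\<in>carrier L. \<forall>b\<in>carrier L. orth L a b \<longrightarrow> m (join L a b) = m a + m b)"

definition has_strong_states :: "('a, 'b) ol_scheme \<Rightarrow> bool" where
  "has_strong_states L \<longleftrightarrow>
     (\<exists>S. S \<noteq> {} \<and> (\<forall>m\<in>S. is_state L m) \<and>
        (\<forall>a\<in>carrier L. \<forall>b\<in>carrier L. \<not> le L a b \<longrightarrow> (\<exists>m\<in>S. m a = 1 \<and> m b \<noteq> 1)))"

end

theory Submission
  imports Defs "HOL-Library.Nat_Bijection"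
begin

locale olat = fixes L :: "('a,'b) ol_scheme" assumes ol: "ortholattice L"
begin

lemma H: "bounded_lattice_on L" "(\<forall>a\<in>carrier L. compl L a \<in> carrier L)"
  "(\<forall>a\<in>carrier L. compl L (compl L a) = a)"
  "(\<forall>a\<in>carrier L. \<forall>b\<in>carrier L. le L a b \<longrightarrow> le L (compl L b) (compl L a))"
  "(\<forall>a\<in>carrier L. meet L a (compl L a) = zero L \<and> join L a (compl L a) = one L)"
  apply (insert ol, unfold ortholattice_def) by (elim conjE, assumption)+
lemma H2: "zero L \<in> carrier L" "one L \<in> carrier L"
     "(\<forall>a\<in>carrier L. \<forall>b\<in>carrier L. meet L a b \<in> carrier L \<and> join L a b \<in> carrier L)"
     "(\<forall>a\<in>carrier L. le L a a)"
     "(\<forall>a\<in>carrier L. \<forall>b\<in>carrier L. le L a b \<and> le L b a \<longrightarrow> a = b)"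
     "(\<forall>a\<in>carrier L. \<forall>b\<in>carrier L. \<forall>c\<in>carrier L. le L a b \<and> le L b c \<longrightarrow> le L a c)"
     "(\<forall>a\<in>carrier L. \<forall>b\<in>carrier L. \<forall>c\<in>carrier L.
        le L (meet L a b) a \<and> le L (meet L a b) b \<and>
        (le L c a \<and> le L c b \<longrightarrow> le L c (meet L a b)))"
     "(\<forall>a\<in>carrier L. \<forall>b\<in>carrier L. \<forall>c\<in>carrier L.
        le L a (join L a b) \<and> le L b (join L a b) \<and>
        (le L a c \<and> le L b c \<longrightarrow> le L (join L a b) c))"
     "(\<forall>a\<in>carrier L. le L (zero L) a \<and> le L a (one L))"
  apply (insert H(1), unfold bounded_lattice_on_def) by (elim conjE, assumption)+

lemma zc: "zero L \<in> carrier L" using H2(1) .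
lemma oc: "one L \<in> carrier L" using H2(2) .
lemma mc: "a\<in>carrier L \<Longrightarrow> b\<in>carrier L \<Longrightarrow> meet L a b \<in> carrier L" using H2(3) by blast
lemma jc: "a\<in>carrier L \<Longrightarrow> b\<in>carrier L \<Longrightarrow> join L a b \<in> carrier L" using H2(3) by blast
lemma refl: "a\<in>carrier L \<Longrightarrow> le L a a" using H2(4) by blast
lemma asym: "a\<in>carrier L \<Longrightarrow> b\<in>carrier L \<Longrightarrow> le L a b \<Longrightarrow> le L b a \<Longrightarrow> a = b" using H2(5) by blast
lemma trans: "a\<in>carrier L \<Longrightarrow> b\<in>carrier L \<Longrightarrow> c\<in>carrier L \<Longrightarrow> le L a b \<Longrightarrow> le L b c \<Longrightarrow> le L a c" using H2(6) by blast
lemma mlb1: "a\<in>carrier L \<Longrightarrow> b\<in>carrier L \<Longrightarrow> le L (meet L a b) a" using H2(7) by blast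
lemma mlb2: "a\<in>carrier L \<Longrightarrow> b\<in>carrier L \<Longrightarrow> le L (meet L a b) b" using H2(7) by blast
lemma mglb: "a\<in>carrier L \<Longrightarrow> b\<in>carrier L \<Longrightarrow> c\<in>carrier L \<Longrightarrow> le L c a \<Longrightarrow> le L c b \<Longrightarrow> le L c (meet L a b)" using H2(7) by blast
lemma jub1: "a\<in>carrier L \<Longrightarrow> b\<in>carrier L \<Longrightarrow> le L a (join L a b)" using H2(8) by (meson H2(2))
lemma jub2: "a\<in>carrier L \<Longrightarrow> b\<in>carrier L \<Longrightarrow> le L b (join L a b)" using H2(8) by (meson H2(2))
lemma jlub: "a\<in>carrier L \<Longrightarrow> b\<in>carrier L \<Longrightarrow> c\<in>carrier L \<Longrightarrow> le L a c \<Longrightarrow> le L b c \<Longrightarrow> le L (join L a b) c" using H2(8) by blast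
lemma zle: "a\<in>carrier L \<Longrightarrow> le L (zero L) a" using H2(9) by blast
lemma leo: "a\<in>carrier L \<Longrightarrow> le L a (one L)" using H2(9) by blast
lemma cc: "a\<in>carrier L \<Longrightarrow> compl L a \<in> carrier L" using H(2) by blast
lemma ccc: "a\<in>carrier L \<Longrightarrow> compl L (compl L a) = a" using H(3) by blast
lemma canti: "a\<in>carrier L \<Longrightarrow> b\<in>carrier L \<Longrightarrow> le L a b \<Longrightarrow> le L (compl L b) (compl L a)" using H(4) by blast
lemma mcompl: "a\<in>carrier L \<Longrightarrow> meet L a (compl L a) = zero L" using H(5) by blast
lemma jcompl: "a\<in>carrier L \<Longrightarrow> join L a (compl L a) = one L" using H(5) by blast

lemma meet_comm: "a\<in>carrier L \<Longrightarrow> b\<in>carrier L \<Longrightarrow> meet L a b = meet L b a"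
  by (meson asym mc mglb mlb1 mlb2)
lemma join_comm: "a\<in>carrier L \<Longrightarrow> b\<in>carrier L \<Longrightarrow> join L a b = join L b a"
  by (meson asym jc jlub jub1 jub2)
lemma le_meet_iff: "a\<in>carrier L \<Longrightarrow> b\<in>carrier L \<Longrightarrow> c\<in>carrier L \<Longrightarrow> le L c (meet L a b) \<longleftrightarrow> le L c a \<and> le L c b"
  by (meson mc mglb mlb1 mlb2 trans)
lemma meet_absorb: "a\<in>carrier L \<Longrightarrow> b\<in>carrier L \<Longrightarrow> le L a b \<Longrightarrow> meet L a b = a"
  by (meson asym mc mglb mlb1 refl)
lemma join_absorb: "a\<in>carrier L \<Longrightarrow> b\<in>carrier L \<Longrightarrow> le L a b \<Longrightarrow> join L a b = b"
  by (meson asym jc jlub jub2 refl)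
lemma compl_zero: "compl L (zero L) = one L"
  by (metis cc jcompl join_absorb zc zle)
lemma compl_one: "compl L (one L) = zero L"
  by (metis ccc compl_zero zc)
lemma imp_c: "a\<in>carrier L \<Longrightarrow> b\<in>carrier L \<Longrightarrow> imp L a b \<in> carrier L"
  unfolding imp_def by (simp add: cc jc mc)
lemma imp_self: "a\<in>carrier L \<Longrightarrow> imp L a a = one L"
  unfolding imp_def by (metis cc jcompl join_comm meet_absorb refl)
lemma imp_one_left: "a\<in>carrier L \<Longrightarrow> imp L (one L) a = a"
  unfolding imp_def by (metis compl_one join_absorb leo mc meet_absorb meet_comm oc zc zle)
lemma imp_le: "a\<in>carrier L \<Longrightarrow> b\<in>carrier L \<Longrightarrow> le L a b \<Longrightarrow> imp L a b = one L"
  unfolding imp_def by (metis cc jcompl join_comm meet_absorb)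
lemma imp_one_right: "a\<in>carrier L \<Longrightarrow> imp L a (one L) = one L"
  using imp_le leo oc by blast
lemma le_eqI: "a\<in>carrier L \<Longrightarrow> b\<in>carrier L \<Longrightarrow> (\<And>c. c\<in>carrier L \<Longrightarrow> le L c a \<longleftrightarrow> le L c b) \<Longrightarrow> a = b"
  by (meson asym refl)
lemma compl_meet: "a\<in>carrier L \<Longrightarrow> b\<in>carrier L \<Longrightarrow> compl L (meet L a b) = join L (compl L a) (compl L b)"
proof -
  assume a: "a\<in>carrier L" and b: "b\<in>carrier L"
  have 1: "le L (join L (compl L a) (compl L b)) (compl L (meet L a b))"
    by (meson a b canti cc jlub mc mlb1 mlb2)
  have "le L (compl L (join L (compl L a) (compl L b))) (meet L a b)"
    by (metis a b canti cc ccc jc jub1 jub2 mglb)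
  then have "le L (compl L (meet L a b)) (join L (compl L a) (compl L b))"
    by (metis a b canti cc ccc jc mc)
  then show ?thesis using 1 by (meson a asym b cc jc mc)
qed

lemma meets_props: "xs \<noteq> [] \<Longrightarrow> set xs \<subseteq> carrier L \<Longrightarrow>
   meets L xs \<in> carrier L \<and> (\<forall>c\<in>carrier L. le L c (meets L xs) \<longleftrightarrow> (\<forall>x\<in>set xs. le L c x))"
proof (induction xs)
  case Nil then show ?case by simp
next
  case (Cons x xs)
  show ?case
  proof (cases xs)
    case Nil then show ?thesis using Cons.prems by simp
  next
    case (Cons y ys)
    then have e: "meets L (x # xs) = meet L x (meets L xs)" by simp
    have "meets L xs \<in> carrier L \<and> (\<forall>c\<in>carrier L. le L c (meets L xs) \<longleftrightarrow> (\<forall>x\<in>set xs. le L c x))"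
      using Cons.IH Cons.prems Cons by simp
    then show ?thesis unfolding e using Cons.prems le_meet_iff mc by auto
  qed
qed

lemma meets_c: "xs \<noteq> [] \<Longrightarrow> set xs \<subseteq> carrier L \<Longrightarrow> meets L xs \<in> carrier L"
  using meets_props by blast
lemma le_meets: "xs \<noteq> [] \<Longrightarrow> set xs \<subseteq> carrier L \<Longrightarrow> c\<in>carrier L \<Longrightarrow>
   le L c (meets L xs) \<longleftrightarrow> (\<forall>x\<in>set xs. le L c x)"
  using meets_props by blast

end

lemma fwd_set: "length xs = n \<Longrightarrow> 0 < n \<Longrightarrow>
  set (map (\<lambda>i. imp L (xs ! i) (xs ! (i + 1))) [0..<length xs - 1] @ [imp L (xs ! (length xs - 1)) (xs ! 0)])
  = (\<lambda>i. imp L (xs ! i) (xs ! ((i + 1) mod n))) ` {..<n}"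
proof -
  assume l: "length xs = n" and n: "0 < n"
  have e: "{..<n} = insert (n-1) {..<n-1}" using n by auto
  have "(\<lambda>i. imp L (xs ! i) (xs ! ((i + 1) mod n))) ` {..<n-1} = (\<lambda>i. imp L (xs ! i) (xs ! (i + 1))) ` {..<n-1}"
    by (rule image_cong) auto
  moreover have "imp L (xs ! (n-1)) (xs ! ((n - 1 + 1) mod n)) = imp L (xs ! (n - 1)) (xs ! 0)"
    using n by simp
  ultimately show ?thesis using l e by (auto simp: atLeast0LessThan)
qed

lemma bwd_set: "length xs = n \<Longrightarrow> 0 < n \<Longrightarrow>
  set (map (\<lambda>i. imp L (xs ! (i + 1)) (xs ! i)) (rev [0..<length xs - 1]) @ [imp L (xs ! 0) (xs ! (length xs - 1))])
  = (\<lambda>i. imp L (xs ! ((i + 1) mod n)) (xs ! i)) ` {..<n}"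
proof -
  assume l: "length xs = n" and n: "0 < n"
  have e: "{..<n} = insert (n-1) {..<n-1}" using n by auto
  have "(\<lambda>i. imp L (xs ! ((i + 1) mod n)) (xs ! i)) ` {..<n-1} = (\<lambda>i. imp L (xs ! (i + 1)) (xs ! i)) ` {..<n-1}"
    by (rule image_cong) auto
  moreover have "imp L (xs ! ((n - 1 + 1) mod n)) (xs ! (n-1)) = imp L (xs ! 0) (xs ! (n - 1))"
    using n by simp
  ultimately show ?thesis using l e by (auto simp: atLeast0LessThan)
qed

lemma cycle_le:
  fixes r :: "nat \<Rightarrow> real"
  assumes n: "0 < n" and h: "\<And>j. j < n \<Longrightarrow> r j \<le> r ((j + 1) mod n)"
  shows "\<And>j. j < n \<Longrightarrow> r j = r 0"
proof -
  have up: "j < n \<Longrightarrow> r 0 \<le> r j" for j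
  proof (induction j)
    case 0 then show ?case by simp
  next
    case (Suc j) then have "r j \<le> r (Suc j)" using h[of j] by simp
    then show ?case using Suc by simp
  qed
  have down: "d < n \<Longrightarrow> r (n - 1 - d) \<le> r (n - 1)" for d
  proof (induction d)
    case 0 then show ?case by simp
  next
    case (Suc d)
    then have "r (n - 1 - Suc d) \<le> r ((n - 1 - Suc d + 1) mod n)" using h[of "n - 1 - Suc d"] by simp
    moreover have "(n - 1 - Suc d + 1) mod n = n - 1 - d" using Suc.prems by simp
    ultimately show ?case using Suc by simp
  qed
  have last: "r (n - 1) \<le> r 0" using h[of "n - 1"] n by simp
  fix j assume j: "j < n"
  have "r j \<le> r (n - 1)" using down[of "n - 1 - j"] j by simp
  then show "r j = r 0" using up[OF j] last by simp
qed

context olat begin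

lemma st_compl: "is_state L m \<Longrightarrow> a \<in> carrier L \<Longrightarrow> m (compl L a) = 1 - m a"
proof -
  assume m: "is_state L m" and a: "a \<in> carrier L"
  have "orth L a (compl L a)" unfolding orth_def using a ccc refl by simp
  then have "m (join L a (compl L a)) = m a + m (compl L a)" using m a cc unfolding is_state_def by blast
  then show ?thesis using m a jcompl unfolding is_state_def by simp
qed

lemma st_mono: "is_state L m \<Longrightarrow> a \<in> carrier L \<Longrightarrow> b \<in> carrier L \<Longrightarrow> le L a b \<Longrightarrow> m a \<le> m b"
proof -
  assume m: "is_state L m" and a: "a \<in> carrier L" and b: "b \<in> carrier L" and ab: "le L a b"
  have "orth L a (compl L b)" unfolding orth_def using b ccc ab by simp
  then have "m (join L a (compl L b)) = m a + m (compl L b)" using m a b cc unfolding is_state_def by blast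
  moreover have "m (join L a (compl L b)) \<le> 1" using m a b cc jc unfolding is_state_def by blast
  ultimately show ?thesis using st_compl[OF m b] by simp
qed

lemma st_imp: "is_state L m \<Longrightarrow> a \<in> carrier L \<Longrightarrow> b \<in> carrier L \<Longrightarrow> m (imp L a b) = 1 - m a + m (meet L a b)"
proof -
  assume m: "is_state L m" and a: "a \<in> carrier L" and b: "b \<in> carrier L"
  have "le L (meet L a b) a" using a b mlb1 by blast
  then have "le L (compl L a) (compl L (meet L a b))" using a b mc canti by blast
  then have "orth L (compl L a) (meet L a b)" unfolding orth_def .
  then have "m (join L (compl L a) (meet L a b)) = m (compl L a) + m (meet L a b)"
    using m a b cc mc unfolding is_state_def by blast
  then show ?thesis unfolding imp_def using st_compl[OF m a] by simp
qed

lemma st_imp1_le: "is_state L m \<Longrightarrow> a \<in> carrier L \<Longrightarrow> b \<in> carrier L \<Longrightarrow> m (imp L a b) = 1 \<Longrightarrow> m a \<le> m b"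
  using st_imp[of m a b] st_mono[of m "meet L a b" b] mc mlb2 by fastforce

lemma st_imp_sym: "is_state L m \<Longrightarrow> a \<in> carrier L \<Longrightarrow> b \<in> carrier L \<Longrightarrow> m a = m b \<Longrightarrow> m (imp L a b) = 1 \<Longrightarrow> m (imp L b a) = 1"
  using st_imp[of m a b] st_imp[of m b a] meet_comm[of a b] by simp

lemma key:
  assumes m: "is_state L m" and xs: "set xs \<subseteq> carrier L" and n: "length xs = n" "0 < n"
    and h: "\<And>i. i < n \<Longrightarrow> m (imp L (xs ! i) (xs ! ((i + 1) mod n))) = 1"
  shows "\<And>i. i < n \<Longrightarrow> m (imp L (xs ! ((i + 1) mod n)) (xs ! i)) = 1"
proof -
  have c: "\<And>i. i < n \<Longrightarrow> xs ! i \<in> carrier L" using xs n by auto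
  have "\<And>j. j < n \<Longrightarrow> m (xs ! j) \<le> m (xs ! ((j + 1) mod n))"
    using st_imp1_le[OF m] h c n by simp
  then have eq: "\<And>j. j < n \<Longrightarrow> m (xs ! j) = m (xs ! 0)" using cycle_le[of n "\<lambda>j. m (xs ! j)"] n by blast
  fix i assume i: "i < n"
  have i2: "(i + 1) mod n < n" using n by simp
  show "m (imp L (xs ! ((i + 1) mod n)) (xs ! i)) = 1"
    using st_imp_sym[OF m c[OF i] c[OF i2]] eq[OF i] eq[OF i2] h[OF i] by simp
qed

lemma key2:
  assumes m: "is_state L m" and xs: "set xs \<subseteq> carrier L" and n: "length xs = n" "0 < n"
    and h: "\<And>i. i < n \<Longrightarrow> m (imp L (xs ! ((i + 1) mod n)) (xs ! i)) = 1"
  shows "\<And>i. i < n \<Longrightarrow> m (imp L (xs ! i) (xs ! ((i + 1) mod n))) = 1"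
proof -
  have c: "\<And>i. i < n \<Longrightarrow> xs ! i \<in> carrier L" using xs n by auto
  have "\<And>j. j < n \<Longrightarrow> - m (xs ! j) \<le> - m (xs ! ((j + 1) mod n))"
    using st_imp1_le[OF m] h c n by simp
  then have eq: "\<And>j. j < n \<Longrightarrow> - m (xs ! j) = - m (xs ! 0)" using cycle_le[of n "\<lambda>j. - m (xs ! j)"] n by blast
  fix i assume i: "i < n"
  have i2: "(i + 1) mod n < n" using n by simp
  show "m (imp L (xs ! i) (xs ! ((i + 1) mod n))) = 1"
    using st_imp_sym[OF m c[OF i2] c[OF i]] eq[OF i] eq[OF i2] h[OF i] by simp
qed

lemma strong_le:
  assumes S: "has_strong_states L" and f: "f \<in> carrier L" and g: "g \<in> carrier L"
    and h: "\<And>m. is_state L m \<Longrightarrow> m f = 1 \<Longrightarrow> m g = 1"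
  shows "le L f g"
  using S f g h unfolding has_strong_states_def by metis

lemma st_meets: "is_state L m \<Longrightarrow> xs \<noteq> [] \<Longrightarrow> set xs \<subseteq> carrier L \<Longrightarrow> m (meets L xs) = 1 \<Longrightarrow> x \<in> set xs \<Longrightarrow> m x = 1"
proof -
  assume m: "is_state L m" and ne: "xs \<noteq> []" and xs: "set xs \<subseteq> carrier L" and one: "m (meets L xs) = 1" and x: "x \<in> set xs"
  have "le L (meets L xs) x" using le_meets[OF ne xs meets_c[OF ne xs]] refl[OF meets_c[OF ne xs]] x by blast
  then have "m (meets L xs) \<le> m x" using st_mono[OF m meets_c[OF ne xs]] x xs by blast
  moreover have "m x \<le> 1" using m x xs unfolding is_state_def by blast
  ultimately show ?thesis using one by simp
qed

theorem part1: "has_strong_states L \<Longrightarrow> length xs = n \<Longrightarrow> 0 < n \<Longrightarrow> set xs \<subseteq> carrier L \<Longrightarrow>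
   godowski_fwd L xs = godowski_bwd L xs"
proof -
  assume S: "has_strong_states L" and l: "length xs = n" and n: "0 < n" and xs: "set xs \<subseteq> carrier L"
  define F where "F = map (\<lambda>i. imp L (xs ! i) (xs ! (i + 1))) [0..<length xs - 1] @ [imp L (xs ! (length xs - 1)) (xs ! 0)]"
  define B where "B = map (\<lambda>i. imp L (xs ! (i + 1)) (xs ! i)) (rev [0..<length xs - 1]) @ [imp L (xs ! 0) (xs ! (length xs - 1))]"
  have c: "\<And>i. i < n \<Longrightarrow> xs ! i \<in> carrier L" using xs l by auto
  have i2: "\<And>i. (i + 1) mod n < n" using n by simp
  have Fs: "set F = (\<lambda>i. imp L (xs ! i) (xs ! ((i + 1) mod n))) ` {..<n}" unfolding F_def using fwd_set[OF l n] .
  have Bs: "set B = (\<lambda>i. imp L (xs ! ((i + 1) mod n)) (xs ! i)) ` {..<n}" unfolding B_def using bwd_set[OF l n] .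
  have Fc: "set F \<subseteq> carrier L" unfolding Fs using c i2 imp_c by auto
  have Bc: "set B \<subseteq> carrier L" unfolding Bs using c i2 imp_c by auto
  have Fn: "F \<noteq> []" and Bn: "B \<noteq> []" unfolding F_def B_def by auto
  have fw: "godowski_fwd L xs = meets L F" unfolding godowski_fwd_def F_def ..
  have bw: "godowski_bwd L xs = meets L B" unfolding godowski_bwd_def B_def ..
  have fc: "meets L F \<in> carrier L" using meets_c[OF Fn Fc] .
  have bc: "meets L B \<in> carrier L" using meets_c[OF Bn Bc] .
  have 1: "le L (meets L F) (meets L B)"
  proof -
    have "le L (meets L F) g" if g: "g \<in> set B" for g
    proof (rule strong_le[OF S fc])
      show "g \<in> carrier L" using g Bc by blast
      fix m assume m: "is_state L m" and mf: "m (meets L F) = 1"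
      have "\<And>i. i < n \<Longrightarrow> m (imp L (xs ! i) (xs ! ((i + 1) mod n))) = 1"
        using st_meets[OF m Fn Fc mf] Fs by auto
      then have "\<And>i. i < n \<Longrightarrow> m (imp L (xs ! ((i + 1) mod n)) (xs ! i)) = 1"
        using key[OF m xs l n] by blast
      then show "m g = 1" using g Bs by auto
    qed
    then show ?thesis using le_meets[OF Bn Bc fc] by blast
  qed
  have 2: "le L (meets L B) (meets L F)"
  proof -
    have "le L (meets L B) g" if g: "g \<in> set F" for g
    proof (rule strong_le[OF S bc])
      show "g \<in> carrier L" using g Fc by blast
      fix m assume m: "is_state L m" and mf: "m (meets L B) = 1"
      have "\<And>i. i < n \<Longrightarrow> m (imp L (xs ! ((i + 1) mod n)) (xs ! i)) = 1"
        using st_meets[OF m Bn Bc mf] Bs by auto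
      then have "\<And>i. i < n \<Longrightarrow> m (imp L (xs ! i) (xs ! ((i + 1) mod n))) = 1"
        using key2[OF m xs l n] by blast
      then show "m g = 1" using g Fs by auto
    qed
    then show ?thesis using le_meets[OF Fn Fc bc] by blast
  qed
  show ?thesis using fw bw asym[OF fc bc 1 2] by simp
qed

end

lemma xs_nth: "i < n \<Longrightarrow> 2 \<le> i \<Longrightarrow> ([a,b] @ replicate (n-2) c) ! i = c"
  by (simp add: nth_append)

context olat begin

lemma G3core:
  assumes n: "3 \<le> n" and a: "a \<in> carrier L" and b: "b \<in> carrier L" and c: "c \<in> carrier L"
    and l: "length xs = n" and x0: "xs ! 0 = a" and x1: "xs ! 1 = b"
    and xi: "\<And>i. i < n \<Longrightarrow> 2 \<le> i \<Longrightarrow> xs ! i = c" and xsc: "set xs \<subseteq> carrier L"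
  shows "godowski_fwd L xs = meet L (imp L a b) (meet L (imp L b c) (imp L c a))"
    and "godowski_bwd L xs = meet L (imp L c b) (meet L (imp L b a) (imp L a c))"
proof -
  have n0: "0 < n" using n by simp
  have x2: "xs ! 2 = c" using xi[of 2] n by simp
  have cx: "\<And>i. i < n \<Longrightarrow> xs ! i \<in> carrier L" using xsc l by auto
  have i2: "\<And>i. (i + 1) mod n < n" using n0 by simp
  define F where "F = map (\<lambda>i. imp L (xs ! i) (xs ! (i + 1))) [0..<length xs - 1] @ [imp L (xs ! (length xs - 1)) (xs ! 0)]"
  define B where "B = map (\<lambda>i. imp L (xs ! (i + 1)) (xs ! i)) (rev [0..<length xs - 1]) @ [imp L (xs ! 0) (xs ! (length xs - 1))]"
  have Fs: "set F = (\<lambda>i. imp L (xs ! i) (xs ! ((i + 1) mod n))) ` {..<n}" unfolding F_def using fwd_set[OF l n0] .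
  have Bs: "set B = (\<lambda>i. imp L (xs ! ((i + 1) mod n)) (xs ! i)) ` {..<n}" unfolding B_def using bwd_set[OF l n0] .
  have Fc: "set F \<subseteq> carrier L" unfolding Fs using cx i2 imp_c by auto
  have Bc: "set B \<subseteq> carrier L" unfolding Bs using cx i2 imp_c by auto
  have Fn: "F \<noteq> []" and Bn: "B \<noteq> []" unfolding F_def B_def by auto
  have fw: "godowski_fwd L xs = meets L F" unfolding godowski_fwd_def F_def ..
  have bw: "godowski_bwd L xs = meets L B" unfolding godowski_bwd_def B_def ..
  have hF: "\<And>i. i < n \<Longrightarrow> imp L (xs ! i) (xs ! ((i + 1) mod n)) \<in> {imp L a b, imp L b c, imp L c a, one L}"
  proof -
    fix i assume i: "i < n"
    show "imp L (xs ! i) (xs ! ((i + 1) mod n)) \<in> {imp L a b, imp L b c, imp L c a, one L}"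
    proof (cases "i = 0")
      case True then show ?thesis using x0 x1 n by simp
    next
      case i0: False
      show ?thesis
      proof (cases "i = 1")
        case True
        have m2: "(i + 1) mod n = 2" using True n by simp
        show ?thesis unfolding m2 using True x1 x2 by simp
      next
        case False
        show ?thesis
        proof (cases "i = n - 1")
          case True then have "(i + 1) mod n = 0" using n by simp
          then show ?thesis using True xi[of "n-1"] n x0 by simp
        next
          case False
          then have "(i + 1) mod n = i + 1" "i + 1 < n" using i by auto
          then show ?thesis using xi[of i] xi[of "i+1"] i i0 \<open>i \<noteq> 1\<close> imp_self[OF c] by simp
        qed
      qed
    qed
  qed
  have hB: "\<And>i. i < n \<Longrightarrow> imp L (xs ! ((i + 1) mod n)) (xs ! i) \<in> {imp L c b, imp L b a, imp L a c, one L}"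
  proof -
    fix i assume i: "i < n"
    show "imp L (xs ! ((i + 1) mod n)) (xs ! i) \<in> {imp L c b, imp L b a, imp L a c, one L}"
    proof (cases "i = 0")
      case True then show ?thesis using x0 x1 n by simp
    next
      case i0: False
      show ?thesis
      proof (cases "i = 1")
        case True
        have m2: "(i + 1) mod n = 2" using True n by simp
        show ?thesis unfolding m2 using True x1 x2 by simp
      next
        case False
        show ?thesis
        proof (cases "i = n - 1")
          case True then have "(i + 1) mod n = 0" using n by simp
          then show ?thesis using True xi[of "n-1"] n x0 by simp
        next
          case False
          then have "(i + 1) mod n = i + 1" "i + 1 < n" using i by auto
          then show ?thesis using xi[of i] xi[of "i+1"] i i0 \<open>i \<noteq> 1\<close> imp_self[OF c] by simp
        qed
      qed
    qed
  qed
  have F0: "imp L a b \<in> set F" unfolding Fs using x0 x1 n by (auto intro!: image_eqI[where x=0])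
  have m12: "(1 + 1) mod n = (2::nat)" using n by simp
  have F1: "imp L b c \<in> set F" unfolding Fs
  proof (rule image_eqI[where x=1])
    show "imp L b c = imp L (xs ! 1) (xs ! ((1 + 1) mod n))" unfolding m12 using x1 x2 by simp
  qed (use n in auto)
  have F2: "imp L c a \<in> set F" unfolding Fs
  proof (rule image_eqI[where x="n-1"])
    show "imp L c a = imp L (xs ! (n - 1)) (xs ! ((n - 1 + 1) mod n))" using xi[of "n-1"] n x0 by simp
  qed (use n in auto)
  have B0: "imp L b a \<in> set B" unfolding Bs using x0 x1 n by (auto intro!: image_eqI[where x=0])
  have B1: "imp L c b \<in> set B" unfolding Bs
  proof (rule image_eqI[where x=1])
    show "imp L c b = imp L (xs ! ((1 + 1) mod n)) (xs ! 1)" unfolding m12 using x1 x2 by simp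
  qed (use n in auto)
  have B2: "imp L a c \<in> set B" unfolding Bs
  proof (rule image_eqI[where x="n-1"])
    show "imp L a c = imp L (xs ! ((n - 1 + 1) mod n)) (xs ! (n - 1))" using xi[of "n-1"] n x0 by simp
  qed (use n in auto)
  have iab: "imp L a b \<in> carrier L" and ibc: "imp L b c \<in> carrier L" and ica: "imp L c a \<in> carrier L"
   and icb: "imp L c b \<in> carrier L" and iba: "imp L b a \<in> carrier L" and iac: "imp L a c \<in> carrier L"
    using a b c imp_c by auto
  show "godowski_fwd L xs = meet L (imp L a b) (meet L (imp L b c) (imp L c a))"
    unfolding fw
  proof (rule le_eqI)
    show "meets L F \<in> carrier L" using meets_c[OF Fn Fc] .
    show "meet L (imp L a b) (meet L (imp L b c) (imp L c a)) \<in> carrier L" using mc iab ibc ica by simp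
    fix d assume d: "d \<in> carrier L"
    have "(\<forall>x\<in>set F. le L d x) \<longleftrightarrow> le L d (imp L a b) \<and> le L d (imp L b c) \<and> le L d (imp L c a)"
    proof
      assume "\<forall>x\<in>set F. le L d x" then show "le L d (imp L a b) \<and> le L d (imp L b c) \<and> le L d (imp L c a)"
        using F0 F1 F2 by blast
    next
      assume h: "le L d (imp L a b) \<and> le L d (imp L b c) \<and> le L d (imp L c a)"
      show "\<forall>x\<in>set F. le L d x"
      proof
        fix x assume "x \<in> set F"
        then obtain i where i: "i < n" "x = imp L (xs ! i) (xs ! ((i + 1) mod n))" unfolding Fs by auto
        then have "x \<in> {imp L a b, imp L b c, imp L c a, one L}" using hF by simp
        then show "le L d x" using h leo[OF d] by auto
      qed
    qed
    then show "le L d (meets L F) = le L d (meet L (imp L a b) (meet L (imp L b c) (imp L c a)))"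
      using le_meets[OF Fn Fc d] le_meet_iff d iab ibc ica mc by simp
  qed
  show "godowski_bwd L xs = meet L (imp L c b) (meet L (imp L b a) (imp L a c))"
    unfolding bw
  proof (rule le_eqI)
    show "meets L B \<in> carrier L" using meets_c[OF Bn Bc] .
    show "meet L (imp L c b) (meet L (imp L b a) (imp L a c)) \<in> carrier L" using mc icb iba iac by simp
    fix d assume d: "d \<in> carrier L"
    have "(\<forall>x\<in>set B. le L d x) \<longleftrightarrow> le L d (imp L c b) \<and> le L d (imp L b a) \<and> le L d (imp L a c)"
    proof
      assume "\<forall>x\<in>set B. le L d x" then show "le L d (imp L c b) \<and> le L d (imp L b a) \<and> le L d (imp L a c)"
        using B0 B1 B2 by blast
    next
      assume h: "le L d (imp L c b) \<and> le L d (imp L b a) \<and> le L d (imp L a c)"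
      show "\<forall>x\<in>set B. le L d x"
      proof
        fix x assume "x \<in> set B"
        then obtain i where i: "i < n" "x = imp L (xs ! ((i + 1) mod n)) (xs ! i)" unfolding Bs by auto
        then have "x \<in> {imp L c b, imp L b a, imp L a c, one L}" using hB by simp
        then show "le L d x" using h leo[OF d] by auto
      qed
    qed
    then show "le L d (meets L B) = le L d (meet L (imp L c b) (meet L (imp L b a) (imp L a c)))"
      using le_meets[OF Bn Bc d] le_meet_iff d icb iba iac mc by simp
  qed
qed

lemma G3:
  assumes n: "3 \<le> n" and a: "a \<in> carrier L" and b: "b \<in> carrier L" and c: "c \<in> carrier L"
  shows "godowski_fwd L ([a,b] @ replicate (n-2) c) = meet L (imp L a b) (meet L (imp L b c) (imp L c a))"
    and "godowski_bwd L ([a,b] @ replicate (n-2) c) = meet L (imp L c b) (meet L (imp L b a) (imp L a c))"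
proof -
  have l: "length ([a,b] @ replicate (n-2) c) = n" using n by simp
  have x0: "([a,b] @ replicate (n-2) c) ! 0 = a" and x1: "([a,b] @ replicate (n-2) c) ! 1 = b" by simp_all
  have xsc: "set ([a,b] @ replicate (n-2) c) \<subseteq> carrier L" using a b c by auto
  show "godowski_fwd L ([a,b] @ replicate (n-2) c) = meet L (imp L a b) (meet L (imp L b c) (imp L c a))"
    by (rule G3core(1)[OF n a b c l x0 x1 xs_nth xsc])
  show "godowski_bwd L ([a,b] @ replicate (n-2) c) = meet L (imp L c b) (meet L (imp L b a) (imp L a c))"
    by (rule G3core(2)[OF n a b c l x0 x1 xs_nth xsc])
qed

lemma Go3: "n_Go n L \<Longrightarrow> 3 \<le> n \<Longrightarrow> a \<in> carrier L \<Longrightarrow> b \<in> carrier L \<Longrightarrow> c \<in> carrier L \<Longrightarrow>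
   meet L (imp L a b) (meet L (imp L b c) (imp L c a)) = meet L (imp L c b) (meet L (imp L b a) (imp L a c))"
proof -
  assume g: "n_Go n L" and n: "3 \<le> n" and a: "a \<in> carrier L" and b: "b \<in> carrier L" and c: "c \<in> carrier L"
  have "length ([a,b] @ replicate (n-2) c) = n" "set ([a,b] @ replicate (n-2) c) \<subseteq> carrier L"
    using n a b c by auto
  then show ?thesis using g G3[OF n a b c] unfolding n_Go_def by metis
qed

theorem part2: "n_Go n L \<Longrightarrow> 3 \<le> n \<Longrightarrow> orthomodular L"
proof -
  assume g: "n_Go n L" and n: "3 \<le> n"
  have le_case: "x = meet L y (join L (compl L y) x)" if x: "x \<in> carrier L" and y: "y \<in> carrier L" and xy: "le L x y" for x y
  proof -
    have e: "meet L (imp L x y) (meet L (imp L y (one L)) (imp L (one L) x)) = meet L (imp L (one L) y) (meet L (imp L y x) (imp L x (one L)))"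
      using Go3[OF g n x y oc] .
    have "imp L x y = one L" using imp_le[OF x y xy] .
    moreover have "imp L y (one L) = one L" "imp L x (one L) = one L" using imp_one_right x y by auto
    moreover have "imp L (one L) x = x" "imp L (one L) y = y" using imp_one_left x y by auto
    moreover have "imp L y x = join L (compl L y) x" unfolding imp_def using meet_absorb[OF x y xy] meet_comm[OF x y] by simp
    ultimately have "meet L (one L) (meet L (one L) x) = meet L y (meet L (join L (compl L y) x) (one L))" using e by simp
    moreover have "meet L (one L) (meet L (one L) x) = x" using meet_comm meet_absorb oc x leo by metis
    moreover have "meet L (join L (compl L y) x) (one L) = join L (compl L y) x" using meet_absorb jc cc x y leo oc by metis
    ultimately show ?thesis by simp
  qed
  show "orthomodular L" unfolding orthomodular_def
  proof (intro conjI ol ballI impI)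
    fix a b assume a: "a \<in> carrier L" and b: "b \<in> carrier L" and ab: "le L a b"
    have ca: "compl L a \<in> carrier L" and cb: "compl L b \<in> carrier L" using a b cc by auto
    have "compl L b = meet L (compl L a) (join L (compl L (compl L a)) (compl L b))"
      using le_case[OF cb ca canti[OF a b ab]] .
    then have "compl L b = meet L (compl L a) (join L a (compl L b))" using ccc[OF a] by simp
    then have "compl L (compl L b) = compl L (meet L (compl L a) (join L a (compl L b)))" by simp
    also have "\<dots> = join L a (compl L (join L a (compl L b)))"
      using compl_meet[OF ca jc[OF a cb]] ccc[OF a] by simp
    also have "compl L (join L a (compl L b)) = meet L (compl L a) b"
    proof -
      have "compl L (meet L (compl L a) b) = join L a (compl L b)" using compl_meet[OF ca b] ccc[OF a] by simp
      then show ?thesis using ccc mc[OF ca b] by metis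
    qed
    finally show "b = join L a (meet L (compl L a) b)" using ccc[OF b] by simp
  qed
qed

end

definition blks :: "nat list list" where
 "blks = [[2,4,13],[5,11,13],[0,3,4],[2,8,15],[6,7,12],[1,8,10],[0,12,14],[8,9,14],[5,6,10]]"
definition orth0 :: "nat \<Rightarrow> nat \<Rightarrow> bool" where
 "orth0 x y \<longleftrightarrow> x \<noteq> y \<and> (\<exists>B\<in>set blks. x \<in> set B \<and> y \<in> set B)"

lemma chk_sym: "\<forall>x\<in>set [0..<16]. \<forall>y\<in>set [0..<16]. orth0 x y \<longrightarrow> orth0 y x"
  unfolding orth0_def blks_def by code_simp
lemma chk_U: "\<forall>B\<in>set blks. \<forall>x\<in>set B. x < 16"
  unfolding blks_def by code_simp
lemma chk_F2: "\<forall>x\<in>set [0..<16]. \<forall>y\<in>set [0..<16]. x \<noteq> y \<longrightarrow> length (filter (\<lambda>z. orth0 z x \<and> orth0 z y) [0..<16]) \<le> 1"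
  unfolding orth0_def blks_def by code_simp
lemma chk_F3: "\<forall>x\<in>set [0..<16]. \<forall>z\<in>set [0..<16]. (\<forall>w\<in>set [0..<16]. orth0 w x \<longrightarrow> orth0 z w) \<longrightarrow> z = x"
  unfolding orth0_def blks_def by code_simp
lemma chk_F4: "\<forall>x\<in>set [0..<16]. 2 \<le> length (filter (\<lambda>z. orth0 z x) [0..<16])"
  unfolding orth0_def blks_def by code_simp
lemma chk_F5: "\<forall>x\<in>set [0..<16]. \<forall>y\<in>set [0..<16]. orth0 x y \<longrightarrow> (\<exists>z\<in>set [0..<16]. orth0 z x \<and> orth0 z y)"
  unfolding orth0_def blks_def by code_simp


lemma o_U: "orth0 x y \<Longrightarrow> x < 16 \<and> y < 16"
  using chk_U unfolding orth0_def by blast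
lemma in16: "x < 16 \<Longrightarrow> x \<in> set [0..<16]" by simp
lemma o_sym: "orth0 x y \<Longrightarrow> orth0 y x"
proof -
  assume h: "orth0 x y"
  have x: "x \<in> set [0..<16]" and y: "y \<in> set [0..<16]" using o_U[OF h] in16 by blast+
  show ?thesis using chk_sym[rule_format, OF x y h] .
qed
lemma o_irr: "\<not> orth0 x x"
  unfolding orth0_def by simp
lemma o_F2: "x < 16 \<Longrightarrow> y < 16 \<Longrightarrow> x \<noteq> y \<Longrightarrow> orth0 z x \<Longrightarrow> orth0 z y \<Longrightarrow> orth0 w x \<Longrightarrow> orth0 w y \<Longrightarrow> z = w"
proof (rule ccontr)
  assume x: "x < 16" and y: "y < 16" and xy: "x \<noteq> y" and h: "orth0 z x" "orth0 z y" "orth0 w x" "orth0 w y" and zw: "z \<noteq> w"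
  let ?xs = "filter (\<lambda>z. orth0 z x \<and> orth0 z y) [0..<16]"
  have "length ?xs \<le> 1" using chk_F2[rule_format, OF in16[OF x] in16[OF y] xy] .
  moreover have "{z, w} \<subseteq> set ?xs" using h o_U by auto
  then have "card {z,w} \<le> card (set ?xs)" by (simp add: card_mono)
  then have "2 \<le> length ?xs" using zw card_length[of ?xs] by simp
  ultimately show False by simp
qed
lemma o_F3: "x < 16 \<Longrightarrow> z < 16 \<Longrightarrow> (\<forall>w. orth0 w x \<longrightarrow> orth0 z w) \<Longrightarrow> z = x"
proof -
  assume x: "x < 16" and z: "z < 16" and h: "\<forall>w. orth0 w x \<longrightarrow> orth0 z w"
  have "\<forall>w\<in>set [0..<16]. orth0 w x \<longrightarrow> orth0 z w" using h by blast
  then show "z = x" using chk_F3[rule_format, OF in16[OF x] in16[OF z]] by blast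
qed
lemma o_F4: "x < 16 \<Longrightarrow> \<exists>y z. y \<noteq> z \<and> orth0 y x \<and> orth0 z x"
proof (rule ccontr)
  assume x: "x < 16" and no: "\<not> (\<exists>y z. y \<noteq> z \<and> orth0 y x \<and> orth0 z x)"
  let ?xs = "filter (\<lambda>z. orth0 z x) [0..<16]"
  have "2 \<le> length ?xs" using chk_F4[rule_format, OF in16[OF x]] .
  moreover have "length ?xs = card (set ?xs)" by (metis distinct_card distinct_filter distinct_upt)
  moreover have "card (set ?xs) \<le> 1" using no by (auto simp: card_le_Suc0_iff_eq)
  ultimately show False by simp
qed
lemma o_F5: "orth0 x y \<Longrightarrow> \<exists>z. orth0 z x \<and> orth0 z y"
proof -
  assume h: "orth0 x y"
  have x: "x \<in> set [0..<16]" and y: "y \<in> set [0..<16]" using o_U[OF h] in16 by blast+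
  show ?thesis using chk_F5[rule_format, OF x y h] by blast
qed

definition polar :: "nat set \<Rightarrow> nat set" where
  "polar A = {x. x < 16 \<and> (\<forall>y\<in>A. orth0 x y)}"
definition U :: "nat set" where "U = {..<16}"
definition closedS :: "nat set \<Rightarrow> bool" where
  "closedS A \<longleftrightarrow> A \<subseteq> U \<and> polar (polar A) = A"

lemma polar_U: "polar A \<subseteq> U" unfolding polar_def U_def by auto
lemma polar_fin[simp]: "finite (polar A)" using polar_U unfolding U_def by (meson finite_lessThan finite_subset)
lemma polar_anti: "A \<subseteq> B \<Longrightarrow> polar B \<subseteq> polar A" unfolding polar_def by auto
lemma polar_ext: "A \<subseteq> U \<Longrightarrow> A \<subseteq> polar (polar A)" unfolding polar_def U_def using o_sym by auto
lemma polar3: "A \<subseteq> U \<Longrightarrow> polar (polar (polar A)) = polar A"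
  by (meson antisym polar_U polar_anti polar_ext)
lemma closed_polar: "A \<subseteq> U \<Longrightarrow> closedS (polar A)"
  unfolding closedS_def using polar3 polar_U by blast
lemma closed_inter: "closedS A \<Longrightarrow> closedS B \<Longrightarrow> closedS (A \<inter> B)"
proof -
  assume A: "closedS A" and B: "closedS B"
  have AU: "A \<subseteq> U" and AA: "polar (polar A) = A" and BU: "B \<subseteq> U" and BB: "polar (polar B) = B"
    using A B unfolding closedS_def by auto
  have "polar (polar (A \<inter> B)) \<subseteq> polar (polar A)" by (intro polar_anti) auto
  moreover have "polar (polar (A \<inter> B)) \<subseteq> polar (polar B)" by (intro polar_anti) auto
  moreover have "A \<inter> B \<subseteq> polar (polar (A \<inter> B))" using AU by (intro polar_ext) auto
  ultimately show ?thesis unfolding closedS_def using AU AA BB by auto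
qed
lemma polar_un: "polar (A \<union> B) = polar A \<inter> polar B" unfolding polar_def by auto
lemma polar_empty: "polar {} = U" unfolding polar_def U_def by auto
lemma polar_UU: "polar U = {}" unfolding polar_def U_def using o_irr by auto
lemma inter_polar: "A \<inter> polar A = {}" unfolding polar_def using o_irr by auto
lemma closed_fin: "closedS A \<Longrightarrow> finite A" unfolding closedS_def U_def using finite_subset by blast
lemma closed_empty: "closedS {}" unfolding closedS_def using polar_empty polar_UU by simp
lemma closed_UU: "closedS U" unfolding closedS_def using polar_empty polar_UU by simp

lemma polar_single2: "x < 16 \<Longrightarrow> polar (polar {x}) = {x}"
proof
  assume x: "x < 16"
  show "{x} \<subseteq> polar (polar {x})" using polar_ext x unfolding U_def by auto
  show "polar (polar {x}) \<subseteq> {x}"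
  proof
    fix z assume "z \<in> polar (polar {x})"
    then have "z < 16" "\<forall>w. orth0 w x \<longrightarrow> orth0 z w" unfolding polar_def using o_U by auto
    then show "z \<in> {x}" using o_F3 x by auto
  qed
qed

lemma closed_shape: "closedS A \<Longrightarrow> A = {} \<or> A = U \<or> (\<exists>x<16. A = {x}) \<or> (\<exists>x<16. A = polar {x})"
proof -
  assume c: "closedS A"
  then have A: "A \<subseteq> U" "polar (polar A) = A" unfolding closedS_def by auto
  show ?thesis
  proof (cases "A = {}")
    case True then show ?thesis by simp
  next
    case ne: False
    show ?thesis
    proof (cases "polar A = {}")
      case True then show ?thesis using A polar_empty by simp
    next
      case False
      then obtain z where z: "z \<in> polar A" by blast
      show ?thesis
      proof (cases "polar A = {z}")
        case True then have "A = polar {z}" using A by simp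
        moreover have "z < 16" using z unfolding polar_def by simp
        ultimately show ?thesis by blast
      next
        case False
        then obtain w where w: "w \<in> polar A" "w \<noteq> z" using z by blast
        have "a = a'" if "a \<in> A" "a' \<in> A" for a a'
        proof -
          have "orth0 a z" "orth0 a w" "orth0 a' z" "orth0 a' w"
            using that z w o_sym unfolding polar_def by auto
          then show ?thesis using o_F2[of z w a a'] z w unfolding polar_def by auto
        qed
        then obtain x where "A = {x}" using ne by blast
        moreover have "x < 16" using A(1) \<open>A = {x}\<close> unfolding U_def by auto
        ultimately show ?thesis by blast
      qed
    qed
  qed
qed

lemma om_sets:
  assumes A: "closedS A" and B: "closedS B" and AB: "A \<subseteq> B"
  shows "polar (A \<union> (polar A \<inter> B)) \<subseteq> polar B"
proof -
  have BU: "B \<subseteq> U" and AU: "A \<subseteq> U" using A B unfolding closedS_def by auto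
  consider "A = {}" | "A = B" | "B = U" | "A \<noteq> {}" "A \<noteq> B" "B \<noteq> U" by blast
  then show ?thesis
  proof cases
    case 1 then show ?thesis using BU polar_empty by (simp add: Int_absorb1)
  next
    case 2 then show ?thesis using inter_polar by (simp add: Int_commute)
  next
    case 3 then show ?thesis using polar_UU polar_un inter_polar polar_U
      by (metis Int_absorb2 Int_commute equalityE)
  next
    case 4
    have nA: "A \<noteq> U" using 4 AB BU by auto
    have nB: "B \<noteq> {}" using 4 AB by auto
    from closed_shape[OF A] closed_shape[OF B] 4 nA nB
    consider (s) x y where "x < 16" "y < 16" "A = {x}" "B = {y}"
      | (m) x y where "x < 16" "y < 16" "A = {x}" "B = polar {y}"
      | (t) x y where "x < 16" "y < 16" "A = polar {x}" "B = {y}"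
      | (u) x y where "x < 16" "y < 16" "A = polar {x}" "B = polar {y}"
      by metis
    then show ?thesis
    proof cases
      case s then show ?thesis using AB 4 by auto
    next
      case t
      obtain p q where "p \<noteq> q" "orth0 p x" "orth0 q x" using o_F4[OF t(1)] by blast
      then have "p \<in> A" "q \<in> A" using t o_U unfolding polar_def by auto
      then show ?thesis using AB t \<open>p \<noteq> q\<close> by auto
    next
      case u
      have "polar B \<subseteq> polar A" using polar_anti[OF AB] .
      then have "{y} \<subseteq> {x}" using u polar_single2 by simp
      then show ?thesis using u 4 by auto
    next
      case m
      have xy: "orth0 x y" using AB m unfolding polar_def by auto
      obtain z where z: "orth0 z x" "orth0 z y" using o_F5[OF xy] by blast
      have xny: "x \<noteq> y" using xy o_irr by auto
      have "polar A \<inter> B = {z}"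
      proof
        show "{z} \<subseteq> polar A \<inter> B" using z m o_U unfolding polar_def by auto
        show "polar A \<inter> B \<subseteq> {z}" using m o_F2[OF m(1) m(2) xny] z unfolding polar_def by auto
      qed
      moreover have "polar {x, z} \<subseteq> {y}"
      proof
        fix w assume "w \<in> polar {x, z}"
        then have "orth0 w x" and "orth0 w z" and w: "w < 16" unfolding polar_def by auto
        moreover have "x \<noteq> z" using z o_irr by auto
        moreover have "orth0 y x" "orth0 y z" using xy z o_sym by auto
        ultimately show "w \<in> {y}" using o_F2[of x z w y] m(1) o_U z by auto
      qed
      ultimately show ?thesis using m polar_single2 by (simp add: insert_commute)
    qed
  qed
qed


definition Lc :: "nat ol" where
  "Lc = \<lparr>carrier = set_encode ` Collect closedS,
         le = (\<lambda>p q. set_decode p \<subseteq> set_decode q),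
         meet = (\<lambda>p q. set_encode (set_decode p \<inter> set_decode q)),
         join = (\<lambda>p q. set_encode (polar (polar (set_decode p \<union> set_decode q)))),
         compl = (\<lambda>p. set_encode (polar (set_decode p))),
         zero = set_encode {}, one = set_encode U\<rparr>"

lemma U_fin[simp]: "finite U" unfolding U_def by simp
lemma car_iff: "p \<in> carrier Lc \<longleftrightarrow> closedS (set_decode p)"
proof
  assume "p \<in> carrier Lc"
  then obtain A where "closedS A" "p = set_encode A" unfolding Lc_def by auto
  then show "closedS (set_decode p)" using closed_fin by simp
next
  assume "closedS (set_decode p)"
  then show "p \<in> carrier Lc" unfolding Lc_def by (metis image_eqI mem_Collect_eq ol.select_convs(1) set_decode_inverse)
qed
lemma dec_le: "le Lc p q \<longleftrightarrow> set_decode p \<subseteq> set_decode q" unfolding Lc_def by simp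
lemma dec_meet: "set_decode (meet Lc p q) = set_decode p \<inter> set_decode q" unfolding Lc_def by simp
lemma dec_join: "set_decode (join Lc p q) = polar (polar (set_decode p \<union> set_decode q))" unfolding Lc_def by simp
lemma dec_compl: "set_decode (compl Lc p) = polar (set_decode p)" unfolding Lc_def by simp
lemma dec_zero: "set_decode (zero Lc) = {}" unfolding Lc_def by simp
lemma dec_one: "set_decode (one Lc) = U" unfolding Lc_def by simp
lemma dec_inj: "set_decode p = set_decode q \<Longrightarrow> p = q" by (metis set_decode_inverse)
lemma cl_U: "closedS A \<Longrightarrow> A \<subseteq> U" unfolding closedS_def by simp
lemma cl_eq: "closedS A \<Longrightarrow> polar (polar A) = A" unfolding closedS_def by simp

lemmas decs = car_iff dec_le dec_meet dec_join dec_compl dec_zero dec_one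

lemma Lc_ol: "ortholattice Lc"
  unfolding ortholattice_def bounded_lattice_on_def
proof (intro conjI ballI impI)
  show "zero Lc \<in> carrier Lc" "one Lc \<in> carrier Lc" by (simp_all add: decs closed_empty closed_UU)
next
  fix a b assume "a \<in> carrier Lc" "b \<in> carrier Lc"
  then have A: "closedS (set_decode a)" and B: "closedS (set_decode b)" by (simp_all add: decs)
  show "meet Lc a b \<in> carrier Lc" using closed_inter[OF A B] by (simp add: decs)
  show "join Lc a b \<in> carrier Lc" using closed_polar[OF polar_U] by (simp add: decs)
  show "le Lc (meet Lc a b) a" "le Lc (meet Lc a b) b" by (auto simp: decs)
  show "le Lc a (join Lc a b)" "le Lc b (join Lc a b)" using polar_ext[of "set_decode a \<union> set_decode b"] cl_U[OF A] cl_U[OF B]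
    by (auto simp: decs)
  show "le Lc a b \<and> le Lc b a \<Longrightarrow> a = b" by (rule dec_inj) (auto simp: decs)
  show "le Lc a b \<Longrightarrow> le Lc (compl Lc b) (compl Lc a)" by (simp add: decs polar_anti)
next
  fix a b c assume "a \<in> carrier Lc" "b \<in> carrier Lc" "c \<in> carrier Lc"
  then have A: "closedS (set_decode a)" and B: "closedS (set_decode b)" and C: "closedS (set_decode c)" by (simp_all add: decs)
  show "le Lc a b \<and> le Lc b c \<Longrightarrow> le Lc a c" by (auto simp: decs)
  show "le Lc c a \<and> le Lc c b \<Longrightarrow> le Lc c (meet Lc a b)" by (auto simp: decs)
  show "le Lc (join Lc a b) c" if "le Lc a c \<and> le Lc b c"
  proof -
    from that have "set_decode a \<union> set_decode b \<subseteq> set_decode c" by (simp add: decs)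
    then have "polar (polar (set_decode a \<union> set_decode b)) \<subseteq> polar (polar (set_decode c))" by (intro polar_anti)
    then show "le Lc (join Lc a b) c" using cl_eq[OF C] by (simp add: decs)
  qed
next
  fix a assume "a \<in> carrier Lc"
  then have A: "closedS (set_decode a)" by (simp add: decs)
  show "le Lc a a" "le Lc (zero Lc) a" by (simp_all add: decs)
  show "le Lc a (one Lc)" using cl_U[OF A] by (simp add: decs)
  show "compl Lc a \<in> carrier Lc" using closed_polar[OF cl_U[OF A]] by (simp add: decs)
  show "compl Lc (compl Lc a) = a" by (rule dec_inj) (simp add: decs cl_eq[OF A])
  show "meet Lc a (compl Lc a) = zero Lc" by (rule dec_inj) (simp add: decs inter_polar)
  show "join Lc a (compl Lc a) = one Lc"
    by (rule dec_inj) (simp add: decs polar_un Int_commute[of "polar (set_decode a)"] inter_polar polar_empty)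
qed

lemma Lc_om: "orthomodular Lc"
  unfolding orthomodular_def
proof (intro conjI Lc_ol ballI impI)
  fix a b assume "a \<in> carrier Lc" "b \<in> carrier Lc" and ab: "le Lc a b"
  then have A: "closedS (set_decode a)" and B: "closedS (set_decode b)" and AB: "set_decode a \<subseteq> set_decode b"
    by (simp_all add: decs)
  let ?X = "set_decode a \<union> (polar (set_decode a) \<inter> set_decode b)"
  have 1: "polar (polar (set_decode b)) \<subseteq> polar (polar ?X)" using polar_anti[OF om_sets[OF A B AB]] .
  have "?X \<subseteq> set_decode b" using AB by auto
  then have 2: "polar (polar ?X) \<subseteq> polar (polar (set_decode b))" by (intro polar_anti)
  show "b = join Lc a (meet Lc (compl Lc a) b)"
    by (rule dec_inj) (use 1 2 cl_eq[OF B] in \<open>simp add: decs\<close>)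
qed

definition plist :: "nat list \<Rightarrow> nat list" where
  "plist xs = filter (\<lambda>x. list_all (orth0 x) xs) [0..<16]"
lemma polar_set: "polar (set xs) = set (plist xs)"
  unfolding polar_def plist_def by (auto simp: list_all_iff)
lemma int_set: "set xs \<inter> set ys = set (filter (\<lambda>x. x \<in> set ys) xs)" by auto
lemma un_set: "set xs \<union> set ys = set (xs @ ys)" by simp

definition "ea = set_encode (polar (set [0]))"
definition "eb = set_encode (polar (set [6]))"
definition "ec = set_encode (polar (set [13]))"

lemma fail3: "meet Lc (imp Lc ea eb) (meet Lc (imp Lc eb ec) (imp Lc ec ea)) \<noteq> meet Lc (imp Lc ec eb) (meet Lc (imp Lc eb ea) (imp Lc ea ec))"
proof
  assume e: "meet Lc (imp Lc ea eb) (meet Lc (imp Lc eb ec) (imp Lc ec ea)) = meet Lc (imp Lc ec eb) (meet Lc (imp Lc eb ea) (imp Lc ea ec))"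
  have "8 \<in> set_decode (meet Lc (imp Lc ea eb) (meet Lc (imp Lc eb ec) (imp Lc ec ea)))"
    unfolding imp_def ea_def eb_def ec_def dec_meet dec_join dec_compl polar_fin set_encode_inverse[OF polar_fin]
    unfolding polar_set int_set un_set polar_set int_set un_set polar_set int_set un_set polar_set int_set un_set
    unfolding orth0_def blks_def plist_def by code_simp
  moreover have "8 \<notin> set_decode (meet Lc (imp Lc ec eb) (meet Lc (imp Lc eb ea) (imp Lc ea ec)))"
    unfolding imp_def ea_def eb_def ec_def dec_meet dec_join dec_compl polar_fin set_encode_inverse[OF polar_fin]
    unfolding polar_set int_set un_set polar_set int_set un_set polar_set int_set un_set polar_set int_set un_set
    unfolding orth0_def blks_def plist_def by code_simp
  ultimately show False using e by simp
qed

lemma abc_car: "ea \<in> carrier Lc" "eb \<in> carrier Lc" "ec \<in> carrier Lc"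
  unfolding ea_def eb_def ec_def Lc_def using closed_polar unfolding U_def by auto

theorem theorem5p6:
  shows "(\<forall>n::nat. \<forall>L :: 'a ol. n \<ge> 3 \<and> ortholattice L \<and> has_strong_states L \<longrightarrow> n_Go n L)
       \<and> (\<forall>n::nat. \<forall>L :: 'b ol. n \<ge> 3 \<and> ortholattice L \<and> n_Go n L \<longrightarrow> orthomodular L)
       \<and> (\<forall>n::nat. n \<ge> 3 \<longrightarrow> (\<exists>L :: nat ol. orthomodular L \<and> \<not> n_Go n L))"
proof (intro conjI allI impI)
  fix n :: nat and L :: "'a ol"
  assume h: "n \<ge> 3 \<and> ortholattice L \<and> has_strong_states L"
  then interpret olat L by (intro olat.intro) simp
  show "n_Go n L" unfolding n_Go_def
  proof (intro allI impI)
    fix xs :: "'a list" assume xs: "length xs = n \<and> set xs \<subseteq> carrier L"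
    have "0 < n" using h by simp
    then show "godowski_fwd L xs = godowski_bwd L xs" using part1[of xs n] h xs by blast
  qed
next
  fix n :: nat and L :: "'b ol"
  assume h: "n \<ge> 3 \<and> ortholattice L \<and> n_Go n L"
  then interpret olat L by (intro olat.intro) simp
  show "orthomodular L" using part2 h by auto
next
  fix n :: nat assume n: "n \<ge> 3"
  interpret olat Lc by (intro olat.intro Lc_ol)
  show "\<exists>L :: nat ol. orthomodular L \<and> \<not> n_Go n L"
  proof (intro exI conjI)
    show "orthomodular Lc" by (rule Lc_om)
    show "\<not> n_Go n Lc" using Go3[OF _ n abc_car] fail3 by blast
  qed
qed

end
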